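(* Let $K$ and $L$ be finite simplicial complexes. If $K$ and $L$ have the same simple homotopy type, then $\overline{\mathrm{rank}}(K)=\overline{\mathrm{rank}}(L)$, where $\overline{\mathrm{rank}}(K):=|\mathcal{X}(K)|-\mathrm{rank}(\mathcal{X}(K)_M)$.
   Context: $\mathcal{X}(K)$ is the face poset of $K$ (simplices ordered by inclusion). For a finite poset $X=\{x_1,\dots,x_n\}$ (with a labelling), $X_M=(x_{i,j})$ is the $n\times n$ matrix with $x_{i,j}=0$ if $x_i\le x_j$ and $x_{i,j}=1$ otherwise. Simple homotopy type of simplicial complexes is in the classical sense of Whitehead. *)

theory Defs
  imports "HOL-Analysis.Analysis" "Jordan_Normal_Form.DL_Rank"
begin

definition simplicial_complex :: "'a set set \<Rightarrow> bool" where
  "simplicial_complex K \<longleftrightarrow>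
     (\<forall>\<sigma>\<in>K. finite \<sigma> \<and> \<sigma> \<noteq> {}) \<and>
     (\<forall>\<sigma>\<in>K. \<forall>\<tau>. \<tau> \<subseteq> \<sigma> \<and> \<tau> \<noteq> {} \<longrightarrow> \<tau> \<in> K)"

definition finite_simplicial_complex :: "'a set set \<Rightarrow> bool" where
  "finite_simplicial_complex K \<longleftrightarrow> simplicial_complex K \<and> finite K"

definition vertices :: "'a set set \<Rightarrow> 'a set" where
  "vertices K = \<Union>K"

definition simplicial_iso :: "('a \<Rightarrow> 'b) \<Rightarrow> 'a set set \<Rightarrow> 'b set set \<Rightarrow> bool" where
  "simplicial_iso f K L \<longleftrightarrow>
     bij_betw f (vertices K) (vertices L) \<and> (\<lambda>\<sigma>. f ` \<sigma>) ` K = L"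

definition isomorphic_complexes :: "'a set set \<Rightarrow> 'b set set \<Rightarrow> bool" where
  "isomorphic_complexes K L \<longleftrightarrow> (\<exists>f. simplicial_iso f K L)"

definition elementary_collapse :: "'a set set \<Rightarrow> 'a set set \<Rightarrow> bool" where
  "elementary_collapse K L \<longleftrightarrow>
     (\<exists>\<sigma> \<tau>. \<sigma> \<in> K \<and> \<tau> \<in> K \<and> \<tau> \<subset> \<sigma> \<and> card \<sigma> = card \<tau> + 1 \<and>
            (\<forall>\<rho>\<in>K. \<tau> \<subset> \<rho> \<longrightarrow> \<rho> = \<sigma>) \<and>
            L = K - {\<sigma>, \<tau>})"

definition elementary_move :: "'a set set \<Rightarrow> 'a set set \<Rightarrow> bool" where
  "elementary_move K L \<longleftrightarrow> elementary_collapse K L \<or> elementary_collapse L K"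

text \<open>Complexes are transported to the vertex type nat,
which supplies arbitrarily many fresh vertices for expansions.\<close>

definition simple_homotopy_equivalent :: "'a set set \<Rightarrow> 'b set set \<Rightarrow> bool" where
  "simple_homotopy_equivalent K L \<longleftrightarrow>
     (\<exists>K' L' :: nat set set.
        finite_simplicial_complex K' \<and> finite_simplicial_complex L' \<and>
        isomorphic_complexes K K' \<and> isomorphic_complexes L L' \<and>
        (\<lambda>A B. elementary_move A B \<and> finite_simplicial_complex A \<and>
               finite_simplicial_complex B)\<^sup>*\<^sup>* K' L')"

definition face_labelling :: "'a set set \<Rightarrow> nat \<Rightarrow> 'a set" where
  "face_labelling K = (SOME x. bij_betw x {..<card K} K)"

definition face_poset_matrix :: "'a set set \<Rightarrow> real mat" where
  "face_poset_matrix K =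
     (let x = face_labelling K
      in mat (card K) (card K) (\<lambda>(i, j). if x i \<subseteq> x j then 0 else 1))"

definition rank_bar :: "'a set set \<Rightarrow> int" where
  "rank_bar K = int (card K) - int (vec_space.rank (card K) (face_poset_matrix K))"

end

theory Submission
  imports Defs
begin

lemma pow_alt_sum:
  assumes "finite S"
  shows "(\<Sum>A\<in>Pow S. (-1::real) ^ card A) = (if S = {} then 1 else 0)"
  using assms
proof (induction S rule: finite_induct)
  case empty
  then show ?case by simp
next
  case (insert a F)
  have P: "Pow (insert a F) = Pow F \<union> insert a ` Pow F" by (rule Pow_insert)
  have D: "Pow F \<inter> insert a ` Pow F = {}" using insert by auto
  have I: "inj_on (insert a) (Pow F)" unfolding inj_on_def using insert.hyps(2) by (metis PowD insert_ident subsetD)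
  have "(\<Sum>A\<in>Pow (insert a F). (-1::real) ^ card A) =
     (\<Sum>A\<in>Pow F. (-1::real) ^ card A) + (\<Sum>A\<in>insert a ` Pow F. (-1::real) ^ card A)"
    unfolding P using D insert.hyps(1) by (intro sum.union_disjoint) auto
  also have "(\<Sum>A\<in>insert a ` Pow F. (-1::real) ^ card A) = (\<Sum>A\<in>Pow F. (-1::real) ^ card (insert a A))"
    using I by (simp add: sum.reindex)
  also have "(\<Sum>A\<in>Pow F. (-1::real) ^ card (insert a A)) = (\<Sum>A\<in>Pow F. - ((-1::real) ^ card A))"
  proof (rule sum.cong)
    fix A assume "A \<in> Pow F"
    then have "card (insert a A) = Suc (card A)" using insert.hyps by (metis PowD card_insert_disjoint finite_subset subsetD)
    then show "(-1::real) ^ card (insert a A) = - ((-1::real) ^ card A)" by simp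
  qed simp
  finally show ?case using insert.IH by (simp add: sum_negf)
qed

definition chi :: "'a set set \<Rightarrow> real" where
  "chi K = (\<Sum>\<sigma>\<in>K. (-1) ^ (card \<sigma> + 1))"

lemma faces_sum:
  assumes "simplicial_complex K" "\<sigma> \<in> K"
  shows "(\<Sum>\<rho>\<in>{\<rho>\<in>K. \<rho> \<subseteq> \<sigma>}. (-1::real) ^ (card \<rho> + 1)) = 1"
proof -
  have fin: "finite \<sigma>" "\<sigma> \<noteq> {}" using assms unfolding simplicial_complex_def by auto
  have cl: "\<And>\<tau>. \<tau> \<subseteq> \<sigma> \<Longrightarrow> \<tau> \<noteq> {} \<Longrightarrow> \<tau> \<in> K"
    using assms unfolding simplicial_complex_def by blast
  have ne: "{} \<notin> K" using assms unfolding simplicial_complex_def by blast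
  have eq: "{\<rho>\<in>K. \<rho> \<subseteq> \<sigma>} = Pow \<sigma> - {{}}"
  proof
    show "{\<rho>\<in>K. \<rho> \<subseteq> \<sigma>} \<subseteq> Pow \<sigma> - {{}}" using ne by blast
    show "Pow \<sigma> - {{}} \<subseteq> {\<rho>\<in>K. \<rho> \<subseteq> \<sigma>}" using cl by blast
  qed
  have "(\<Sum>\<rho>\<in>Pow \<sigma>. (-1::real) ^ (card \<rho> + 1)) = 0"
    using pow_alt_sum[OF fin(1)] fin(2) by (simp add: sum_negf)
  moreover have "(\<Sum>\<rho>\<in>Pow \<sigma>. (-1::real) ^ (card \<rho> + 1)) = (\<Sum>\<rho>\<in>Pow \<sigma> - {{}}. (-1::real) ^ (card \<rho> + 1)) + (-1)"
    using fin by (subst sum.remove[of _ "{}"]) auto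
  ultimately show ?thesis unfolding eq by simp
qed


lemma zeta_up:
  fixes v :: "nat \<Rightarrow> real"
  assumes inj: "inj_on x {..<n}"
    and h: "\<And>i. i < n \<Longrightarrow> (\<Sum>j\<in>{j. j < n \<and> x i \<subseteq> x j}. v j) = 0"
  shows "j < n \<Longrightarrow> v j = 0"
proof (induction "card {k. k < n \<and> x j \<subset> x k}" arbitrary: j rule: less_induct)
  case less
  have sup0: "v k = 0" if "k < n" "x j \<subset> x k" for k
  proof (rule less.hyps[OF _ that(1)])
    have "{l. l < n \<and> x k \<subset> x l} \<subset> {l. l < n \<and> x j \<subset> x l}" using that by auto
    then show "card {l. l < n \<and> x k \<subset> x l} < card {l. l < n \<and> x j \<subset> x l}"
      by (rule psubset_card_mono[rotated]) simp
  qed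
  have split: "{l. l < n \<and> x j \<subseteq> x l} = insert j {l. l < n \<and> x j \<subset> x l}"
  proof -
    have "l = j" if "l < n" "x j = x l" for l
      using inj that less.prems unfolding inj_on_def by auto
    then show ?thesis using less.prems by auto
  qed
  have "0 = (\<Sum>l\<in>{l. l < n \<and> x j \<subseteq> x l}. v l)" using h[OF less.prems] by simp
  also have "\<dots> = v j + (\<Sum>l\<in>{l. l < n \<and> x j \<subset> x l}. v l)"
    unfolding split by (subst sum.insert) auto
  also have "(\<Sum>l\<in>{l. l < n \<and> x j \<subset> x l}. v l) = 0"
    using sup0 by (intro sum.neutral) auto
  finally show ?case by simp
qed

lemma sum_reindex_lab:
  assumes "inj_on x {..<n}" "S \<subseteq> {..<n}"
  shows "(\<Sum>k\<in>S. f (x k)) = (\<Sum>\<rho>\<in>x ` S. f \<rho>)"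
  using assms by (subst sum.reindex) (auto intro: inj_on_subset)

lemma zeta_down:
  fixes y :: "nat \<Rightarrow> real"
  assumes sc: "simplicial_complex K" and bij: "bij_betw x {..<n} K"
    and h: "\<And>j. j < n \<Longrightarrow> (\<Sum>i\<in>{i. i < n \<and> x i \<subseteq> x j}. y i) = s"
  shows "i < n \<Longrightarrow> y i = s * (-1) ^ (card (x i) + 1)"
proof (induction "card {k. k < n \<and> x k \<subset> x i}" arbitrary: i rule: less_induct)
  case less
  have inj: "inj_on x {..<n}" and im: "x ` {..<n} = K" using bij unfolding bij_betw_def by auto
  have sub: "y k = s * (-1) ^ (card (x k) + 1)" if "k < n" "x k \<subset> x i" for k
  proof (rule less.hyps[OF _ that(1)])
    have "{l. l < n \<and> x l \<subset> x k} \<subset> {l. l < n \<and> x l \<subset> x i}" using that by auto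
    then show "card {l. l < n \<and> x l \<subset> x k} < card {l. l < n \<and> x l \<subset> x i}"
      by (rule psubset_card_mono[rotated]) simp
  qed
  have split: "{l. l < n \<and> x l \<subseteq> x i} = insert i {l. l < n \<and> x l \<subset> x i}"
  proof -
    have "l = i" if "l < n" "x l = x i" for l
      using inj that less.prems unfolding inj_on_def by auto
    then show ?thesis using less.prems by auto
  qed
  have xi: "x i \<in> K" using less.prems im by auto
  have img: "x ` {l. l < n \<and> x l \<subseteq> x i} = {\<rho>\<in>K. \<rho> \<subseteq> x i}" using im by auto
  have "1 = (\<Sum>\<rho>\<in>{\<rho>\<in>K. \<rho> \<subseteq> x i}. (-1::real) ^ (card \<rho> + 1))"
    using faces_sum[OF sc xi] by simp
  also have "\<dots> = (\<Sum>l\<in>{l. l < n \<and> x l \<subseteq> x i}. (-1::real) ^ (card (x l) + 1))"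
    unfolding img[symmetric] by (rule sum_reindex_lab[symmetric, OF inj]) auto
  also have "\<dots> = (-1::real) ^ (card (x i) + 1) + (\<Sum>l\<in>{l. l < n \<and> x l \<subset> x i}. (-1::real) ^ (card (x l) + 1))"
    unfolding split by (subst sum.insert) auto
  finally have U: "(\<Sum>l\<in>{l. l < n \<and> x l \<subset> x i}. (-1::real) ^ (card (x l) + 1)) = 1 - (-1::real) ^ (card (x i) + 1)"
    by simp
  have "s = (\<Sum>l\<in>{l. l < n \<and> x l \<subseteq> x i}. y l)" using h[OF less.prems] by simp
  also have "\<dots> = y i + (\<Sum>l\<in>{l. l < n \<and> x l \<subset> x i}. y l)"
    unfolding split by (subst sum.insert) auto
  also have "(\<Sum>l\<in>{l. l < n \<and> x l \<subset> x i}. y l) = (\<Sum>l\<in>{l. l < n \<and> x l \<subset> x i}. s * (-1::real) ^ (card (x l) + 1))"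
    using sub by (intro sum.cong) auto
  also have "\<dots> = s * (1 - (-1::real) ^ (card (x i) + 1))" by (subst sum_distrib_left[symmetric]) (simp only: U)
  finally show ?case by (simp add: algebra_simps)
qed

lemma chi_collapse:
  assumes "finite K" "elementary_collapse K L"
  shows "chi L = chi K"
proof -
  obtain \<sigma> \<tau> where st: "\<sigma> \<in> K" "\<tau> \<in> K" "\<tau> \<subset> \<sigma>" "card \<sigma> = card \<tau> + 1" "L = K - {\<sigma>, \<tau>}"
    using assms(2) unfolding elementary_collapse_def by blast
  have ne: "\<sigma> \<noteq> \<tau>" using st by auto
  have "chi K = (-1) ^ (card \<sigma> + 1) + (\<Sum>\<rho>\<in>K - {\<sigma>}. (-1) ^ (card \<rho> + 1))"
    unfolding chi_def using assms(1) st(1) by (simp add: sum.remove)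
  also have "(\<Sum>\<rho>\<in>K - {\<sigma>}. (-1::real) ^ (card \<rho> + 1)) = (-1) ^ (card \<tau> + 1) + (\<Sum>\<rho>\<in>K - {\<sigma>} - {\<tau>}. (-1) ^ (card \<rho> + 1))"
    using assms(1) st(2) ne by (subst sum.remove[of _ \<tau>]) auto
  also have "K - {\<sigma>} - {\<tau>} = L" using st by auto
  finally show ?thesis unfolding chi_def using st(4) by simp
qed

lemma chi_iso:
  assumes "simplicial_iso f K L"
  shows "chi L = chi K"
proof -
  have bij: "bij_betw f (vertices K) (vertices L)" and L: "L = (\<lambda>\<sigma>. f ` \<sigma>) ` K"
    using assms unfolding simplicial_iso_def by auto
  have inj: "inj_on f (\<Union>K)" using bij unfolding bij_betw_def vertices_def by auto
  have inj2: "inj_on (\<lambda>\<sigma>. f ` \<sigma>) K"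
  proof (rule inj_onI)
    fix a b assume "a \<in> K" "b \<in> K" "f ` a = f ` b"
    then show "a = b" using inj_on_image_eq_iff[OF inj] by (metis Sup_upper)
  qed
  have card: "card (f ` \<sigma>) = card \<sigma>" if "\<sigma> \<in> K" for \<sigma>
    using inj that by (meson Sup_upper card_image inj_on_subset)
  show ?thesis unfolding chi_def L using inj2 card by (simp add: sum.reindex)
qed



lemma mult_entry:
  fixes A :: "real mat"
  assumes "A \<in> carrier_mat n n" "v \<in> carrier_vec n" "i < n"
  shows "(A *\<^sub>v v) $ i = (\<Sum>j\<in>{0..<n}. A $$ (i, j) * v $ j)"
  using assms by (simp add: scalar_prod_def)

lemma sum_filter_real:
  fixes f :: "nat \<Rightarrow> real"
  shows "(\<Sum>j\<in>{0..<n}. (if P j then c else 0) * f j) = c * (\<Sum>j\<in>{j. j < n \<and> P j}. f j)"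
proof -
  have e: "{j. j < n \<and> P j} = {j\<in>{0..<n}. P j}" by auto
  have "c * (\<Sum>j\<in>{j. j < n \<and> P j}. f j) = (\<Sum>j\<in>{j\<in>{0..<n}. P j}. c * f j)"
    unfolding e by (simp add: sum_distrib_left)
  also have "\<dots> = (\<Sum>j\<in>{0..<n}. if P j then c * f j else 0)" by (rule sum.inter_filter) simp
  also have "\<dots> = (\<Sum>j\<in>{0..<n}. (if P j then c else 0) * f j)" by (rule sum.cong) auto
  finally show ?thesis by simp
qed

lemma det_Z:
  assumes inj: "inj_on x {..<n}"
  shows "det (mat n n (\<lambda>(i,j). if x i \<subseteq> x j then -1 else (0::real))) \<noteq> 0"
proof
  let ?Z = "mat n n (\<lambda>(i,j). if x i \<subseteq> x j then -1 else (0::real))"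
  have c: "?Z \<in> carrier_mat n n" by simp
  assume "det ?Z = 0"
  then obtain v where v: "v \<in> carrier_vec n" "v \<noteq> 0\<^sub>v n" "?Z *\<^sub>v v = 0\<^sub>v n"
    using det_0_iff_vec_prod_zero_field[OF c] by blast
  have "(\<Sum>j\<in>{j. j < n \<and> x i \<subseteq> x j}. v $ j) = 0" if "i < n" for i
  proof -
    have "0 = (?Z *\<^sub>v v) $ i" using v(3) that by simp
    also have "\<dots> = (\<Sum>j\<in>{0..<n}. (if x i \<subseteq> x j then -1 else 0) * v $ j)"
      using mult_entry[OF c v(1) that] that by simp
    also have "\<dots> = - (\<Sum>j\<in>{j. j < n \<and> x i \<subseteq> x j}. v $ j)"
      by (subst sum_filter_real) simp
    finally show ?thesis by simp
  qed
  then have "v $ j = 0" if "j < n" for j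
    using zeta_up[OF inj, of "\<lambda>j. v $ j"] that by blast
  then have "v = 0\<^sub>v n" using v(1) by (intro eq_vecI) auto
  with v(2) show False by simp
qed



lemma detM_iff:
  fixes K :: "'a set set"
  assumes sc: "simplicial_complex K" and bij: "bij_betw x {..<n} K"
  shows "det (mat n n (\<lambda>(i,j). if x i \<subseteq> x j then 0 else (1::real))) = 0 \<longleftrightarrow> chi K = 1"
proof -
  let ?M = "mat n n (\<lambda>(i,j). if x i \<subseteq> x j then 0 else (1::real))"
  let ?T = "transpose_mat ?M"
  let ?u = "\<lambda>\<rho>. (-1::real) ^ (card \<rho> + 1)"
  have inj: "inj_on x {..<n}" and im: "x ` {..<n} = K" using bij unfolding bij_betw_def by auto
  have cM: "?M \<in> carrier_mat n n" by simp
  have cT: "?T \<in> carrier_mat n n" by simp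
  have dT: "det ?T = det ?M" by (rule det_transpose[OF cM])
  have Tv: "(?T *\<^sub>v v) $ j = (\<Sum>i\<in>{0..<n}. v $ i) - (\<Sum>i\<in>{i. i < n \<and> x i \<subseteq> x j}. v $ i)"
    if "v \<in> carrier_vec n" "j < n" for v j
  proof -
    have "(?T *\<^sub>v v) $ j = (\<Sum>i\<in>{0..<n}. ?T $$ (j, i) * v $ i)" by (rule mult_entry[OF cT that])
    also have "\<dots> = (\<Sum>i\<in>{0..<n}. v $ i - (if x i \<subseteq> x j then 1 else 0) * v $ i)"
      using that(2) by (intro sum.cong) auto
    also have "\<dots> = (\<Sum>i\<in>{0..<n}. v $ i) - (\<Sum>i\<in>{0..<n}. (if x i \<subseteq> x j then 1 else 0) * v $ i)"
      by (simp add: sum_subtractf)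
    also have "(\<Sum>i\<in>{0..<n}. (if x i \<subseteq> x j then 1 else 0) * v $ i) = (\<Sum>i\<in>{i. i < n \<and> x i \<subseteq> x j}. v $ i)"
      by (subst sum_filter_real) simp
    finally show ?thesis .
  qed
  have chi_sum: "chi K = (\<Sum>i\<in>{0..<n}. ?u (x i))"
    unfolding chi_def using sum_reindex_lab[OF inj, of "{0..<n}" ?u] im by (simp add: lessThan_atLeast0)
  have faces: "(\<Sum>i\<in>{i. i < n \<and> x i \<subseteq> x j}. ?u (x i)) = 1" if "j < n" for j
  proof -
    have xj: "x j \<in> K" using that im by auto
    have img: "x ` {l. l < n \<and> x l \<subseteq> x j} = {\<rho>\<in>K. \<rho> \<subseteq> x j}" using im by auto
    show ?thesis using sum_reindex_lab[OF inj, of "{l. l < n \<and> x l \<subseteq> x j}" ?u] img faces_sum[OF sc xj]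
      by auto
  qed
  show ?thesis
  proof
    assume "det ?M = 0"
    then have "det ?T = 0" using dT by simp
    then obtain v where v: "v \<in> carrier_vec n" "v \<noteq> 0\<^sub>v n" "?T *\<^sub>v v = 0\<^sub>v n"
      using det_0_iff_vec_prod_zero_field[OF cT] by blast
    define s where "s = (\<Sum>i\<in>{0..<n}. v $ i)"
    have h: "(\<Sum>i\<in>{i. i < n \<and> x i \<subseteq> x j}. v $ i) = s" if "j < n" for j
    proof -
      have "0 = (?T *\<^sub>v v) $ j" using v(3) that by simp
      then show ?thesis using Tv[OF v(1) that] unfolding s_def by simp
    qed
    have vi: "v $ i = s * ?u (x i)" if "i < n" for i
      using zeta_down[OF sc bij, of "\<lambda>i. v $ i" s] h that by blast
    have "s \<noteq> 0"
    proof
      assume "s = 0"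
      then have "v = 0\<^sub>v n" using v(1) vi by (intro eq_vecI) auto
      with v(2) show False by simp
    qed
    have e: "(\<Sum>i\<in>{0..<n}. v $ i) = (\<Sum>i\<in>{0..<n}. s * ?u (x i))" using vi by (intro sum.cong) auto
    have "s = (\<Sum>i\<in>{0..<n}. s * ?u (x i))" using e unfolding s_def[symmetric] .
    then have "s = s * chi K" unfolding chi_sum sum_distrib_left .
    then show "chi K = 1" using \<open>s \<noteq> 0\<close> by simp
  next
    assume c1: "chi K = 1"
    have "n \<noteq> 0"
    proof
      assume "n = 0"
      then have "K = {}" using im by auto
      then show False using c1 unfolding chi_def by simp
    qed
    define v where "v = vec n (\<lambda>i. ?u (x i))"
    have vc: "v \<in> carrier_vec n" unfolding v_def by simp
    have "v \<noteq> 0\<^sub>v n"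
    proof
      assume "v = 0\<^sub>v n"
      then have "v $ 0 = 0" using \<open>n \<noteq> 0\<close> by simp
      then show False using \<open>n \<noteq> 0\<close> unfolding v_def by simp
    qed
    moreover have "?T *\<^sub>v v = 0\<^sub>v n"
    proof (rule eq_vecI)
      fix j assume "j < dim_vec (0\<^sub>v n :: real vec)"
      then have j: "j < n" by simp
      have "(?T *\<^sub>v v) $ j = (\<Sum>i\<in>{0..<n}. ?u (x i)) - (\<Sum>i\<in>{i. i < n \<and> x i \<subseteq> x j}. ?u (x i))"
        using Tv[OF vc j] unfolding v_def by simp
      also have "\<dots> = 0" using faces[OF j] chi_sum c1 by simp
      finally show "(?T *\<^sub>v v) $ j = (0\<^sub>v n :: real vec) $ j" using j by simp
    qed simp
    ultimately have "det ?T = 0" using det_0_iff_vec_prod_zero_field[OF cT] vc by blast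
    then show "det ?M = 0" using dT by simp
  qed
qed



lemma rank_char:
  fixes K :: "'a set set"
  assumes sc: "simplicial_complex K" and bij: "bij_betw x {..<n} K"
  shows "int n - int (vec_space.rank n (mat n n (\<lambda>(i,j). if x i \<subseteq> x j then 0 else (1::real))))
    = (if chi K = 1 then 1 else 0)"
proof -
  let ?M = "mat n n (\<lambda>(i,j). if x i \<subseteq> x j then 0 else (1::real))"
  let ?Z = "mat n n (\<lambda>(i,j). if x i \<subseteq> x j then -1 else (0::real))"
  let ?J = "mat n n (\<lambda>_. (-1::real))"
  have inj: "inj_on x {..<n}" using bij unfolding bij_betw_def by auto
  have cM: "?M \<in> carrier_mat n n" and cZ: "?Z \<in> carrier_mat n n" and cJ: "?J \<in> carrier_mat n n" by auto
  have rZ: "vec_space.rank n ?Z = n" using vec_space.det_rank_iff[OF cZ] det_Z[OF inj] by simp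
  have ZMJ: "?Z = ?M + ?J" by (rule eq_matI) auto
  have rJ: "vec_space.rank n ?J \<le> 1"
    by (rule vec_space.rank_le_1_product_entries[OF cJ, of "\<lambda>_. -1" "\<lambda>_. 1"]) auto
  have sub: "vec_space.rank n ?Z \<le> vec_space.rank n ?M + vec_space.rank n ?J"
    unfolding ZMJ by (rule vec_space.rank_subadditive[OF cM cJ])
  have le: "vec_space.rank n ?M \<le> n" by (rule vec_space.rank_le_nc[OF cM])
  have iff: "det ?M \<noteq> 0 \<longleftrightarrow> vec_space.rank n ?M = n" by (rule vec_space.det_rank_iff[OF cM])
  have d: "det ?M = 0 \<longleftrightarrow> chi K = 1" by (rule detM_iff[OF sc bij])
  show ?thesis
  proof (cases "chi K = 1")
    case True
    then have "vec_space.rank n ?M \<noteq> n" using iff d by simp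
    then have "vec_space.rank n ?M = n - 1" "n \<ge> 1" using rZ rJ sub le by linarith+
    then show ?thesis using True by simp
  next
    case False
    then have "vec_space.rank n ?M = n" using iff d by simp
    then show ?thesis using False by simp
  qed
qed

lemma rank_bar_chi:
  fixes K :: "'a set set"
  assumes "finite_simplicial_complex K"
  shows "rank_bar K = (if chi K = 1 then 1 else 0)"
proof -
  have sc: "simplicial_complex K" and fin: "finite K" using assms unfolding finite_simplicial_complex_def by auto
  have ex: "\<exists>x. bij_betw x {..<card K} K"
    using ex_bij_betw_nat_finite[OF fin] by (simp add: lessThan_atLeast0)
  have bij: "bij_betw (face_labelling K) {..<card K} K"
    unfolding face_labelling_def by (rule someI_ex[OF ex])
  show ?thesis unfolding rank_bar_def face_poset_matrix_def Let_def
    by (rule rank_char[OF sc bij])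
qed

lemma chi_rtranclp:
  assumes "(\<lambda>A B. elementary_move A B \<and> finite_simplicial_complex A \<and>
               finite_simplicial_complex B)\<^sup>*\<^sup>* K L"
  shows "chi L = chi K"
  using assms
proof (induction rule: rtranclp_induct)
  case base
  then show ?case by simp
next
  case (step y z)
  then have "chi z = chi y"
    unfolding elementary_move_def finite_simplicial_complex_def
    using chi_collapse by metis
  then show ?case using step by simp
qed

theorem mainTheorem10:
  fixes K :: "'a set set" and L :: "'b set set"
  assumes "finite_simplicial_complex K"
    and "finite_simplicial_complex L"
    and "simple_homotopy_equivalent K L"
  shows "rank_bar K = rank_bar L"
proof -
  obtain K' L' :: "nat set set" where
    h: "isomorphic_complexes K K'" "isomorphic_complexes L L'"
      "(\<lambda>A B. elementary_move A B \<and> finite_simplicial_complex A \<and>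
               finite_simplicial_complex B)\<^sup>*\<^sup>* K' L'"
    using assms(3) unfolding simple_homotopy_equivalent_def by blast
  have "chi K' = chi K" "chi L' = chi L"
    using h(1,2) chi_iso unfolding isomorphic_complexes_def by blast+
  moreover have "chi L' = chi K'" by (rule chi_rtranclp[OF h(3)])
  ultimately have "chi K = chi L" by simp
  then show ?thesis using rank_bar_chi[OF assms(1)] rank_bar_chi[OF assms(2)] by simp
qed

end
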